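(* Let $\boldsymbol{X}$ be an $\boldsymbol{\mathcal{L}}_\Lambda$ modal space, where $\mathcal{L}$ is based on a finite atom set $\Phi$ and modal equivalence and bisimilarity coincide on $X$. Then $\mathcal{D}_{\boldsymbol{X}}$ contains a metric $d_w$ inducing the same topology on $\boldsymbol{X}$ as the $n$-bisimulation metric $d_B$.
   Context: Given a set $\Phi$ of atoms and a finite set $I$ of agents, $\mathcal{L}$ is the modal language $\varphi::=\top\mid p\mid\neg\varphi\mid\varphi\wedge\varphi\mid\square_i\varphi$. A logic $\Lambda$ is a normal modal logic over $\mathcal{L}$ extending $K$; $\boldsymbol{\varphi}$ is the class of formulas $\Lambda$-equivalent to $\varphi$ and $\boldsymbol{\mathcal{L}}_\Lambda$ the set of such classes. Kripke models have countable nonempty state sets, relations $R_i$ ($i\in I$) and a valuation; pointed models are evaluated with standard semantics. For a set $X$ of pointed Kripke models, the $\boldsymbol{\mathcal{L}}_\Lambda$ modal space is $\boldsymbol{X}=\{\boldsymbol{x}:x\in X\}$ with $\boldsymbol{x}=\{y\in X:y\vDash\varphi\text{ iff }x\vDash\varphi\text{ for all }\varphi\}$. The $n$-bisimulation metric is $d_B(\boldsymbol{x},\boldsymbol{y})=0$ if $x,y$ are $n$-bisimilar for all $n\in\mathbb{N}_0$, and $2^{-n}$ for the least $n$ such that $x,y$ are not $n$-bisimilar. Metric family: let $D\subseteq\boldsymbol{\mathcal{L}}_\Lambda$ be such that for every $\boldsymbol{\psi}$ there is a finite $D_\psi\subseteq D$ such that any $x,y\in X$ satisfying exactly the same elements of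 $D_\psi$ agree on $\psi$; enumerate $D$ as $\boldsymbol{\varphi}_1,\boldsymbol{\varphi}_2,\dots$; let $d_k(\boldsymbol{x},\boldsymbol{y})=0$ if ($x\vDash\varphi_k$ iff $y\vDash\varphi_k$) and $1$ otherwise; let $w:D\to\mathbb{R}_{>0}$ have $\sum_k w(\boldsymbol{\varphi}_k)<\infty$; and set $d_w=\sum_k w(\boldsymbol{\varphi}_k)d_k$. $\mathcal{D}_{\boldsymbol{X}}$ is the set of all such $d_w$. *)

theory Defs
  imports "HOL-Analysis.Analysis"
begin

datatype ('a, 'i) fm =
    Top
  | Atom 'a
  | Neg "('a, 'i) fm"
  | Conj "('a, 'i) fm" "('a, 'i) fm"
  | Box 'i "('a, 'i) fm"

definition Disj :: "('a,'i) fm \<Rightarrow> ('a,'i) fm \<Rightarrow> ('a,'i) fm" where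
  "Disj p q = Neg (Conj (Neg p) (Neg q))"

definition Imp :: "('a,'i) fm \<Rightarrow> ('a,'i) fm \<Rightarrow> ('a,'i) fm" where
  "Imp p q = Neg (Conj p (Neg q))"

definition Iff :: "('a,'i) fm \<Rightarrow> ('a,'i) fm \<Rightarrow> ('a,'i) fm" where
  "Iff p q = Conj (Imp p q) (Imp q p)"

text \<open>Propositional evaluation, treating boxed formulas as propositional letters.\<close>
fun peval :: "(('a,'i) fm \<Rightarrow> bool) \<Rightarrow> ('a,'i) fm \<Rightarrow> bool" where
  "peval v Top = True"
| "peval v (Atom p) = v (Atom p)"
| "peval v (Neg p) = (\<not> peval v p)"
| "peval v (Conj p q) = (peval v p \<and> peval v q)"
| "peval v (Box i p) = v (Box i p)"

definition tautology :: "('a,'i) fm \<Rightarrow> bool" where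
  "tautology p \<longleftrightarrow> (\<forall>v. peval v p)"

fun subst :: "('a \<Rightarrow> ('a,'i) fm) \<Rightarrow> ('a,'i) fm \<Rightarrow> ('a,'i) fm" where
  "subst s Top = Top"
| "subst s (Atom p) = s p"
| "subst s (Neg p) = Neg (subst s p)"
| "subst s (Conj p q) = Conj (subst s p) (subst s q)"
| "subst s (Box i p) = Box i (subst s p)"

definition normal_logic :: "('a,'i) fm set \<Rightarrow> bool" where
  "normal_logic L \<longleftrightarrow>
     (\<forall>p. tautology p \<longrightarrow> p \<in> L)
   \<and> (\<forall>i p q. Imp (Box i (Imp p q)) (Imp (Box i p) (Box i q)) \<in> L)
   \<and> (\<forall>p q. p \<in> L \<longrightarrow> Imp p q \<in> L \<longrightarrow> q \<in> L)
   \<and> (\<forall>i p. p \<in> L \<longrightarrow> Box i p \<in> L)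
   \<and> (\<forall>s p. p \<in> L \<longrightarrow> subst s p \<in> L)"

definition lequiv :: "('a,'i) fm set \<Rightarrow> ('a,'i) fm \<Rightarrow> ('a,'i) fm \<Rightarrow> bool" where
  "lequiv L p q \<longleftrightarrow> Iff p q \<in> L"

text \<open>Countable state sets are represented as subsets of nat.\<close>
record ('a, 'i) kmodel =
  W :: "nat set"
  R :: "'i \<Rightarrow> nat \<Rightarrow> nat \<Rightarrow> bool"
  V :: "nat \<Rightarrow> 'a set"

type_synonym ('a, 'i) pmodel = "('a, 'i) kmodel \<times> nat"

definition wf_pmodel :: "('a,'i) pmodel \<Rightarrow> bool" where
  "wf_pmodel x \<longleftrightarrow> snd x \<in> W (fst x)
     \<and> (\<forall>i u v. R (fst x) i u v \<longrightarrow> u \<in> W (fst x) \<and> v \<in> W (fst x))"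

fun sat :: "('a,'i) kmodel \<Rightarrow> nat \<Rightarrow> ('a,'i) fm \<Rightarrow> bool" where
  "sat M w Top = True"
| "sat M w (Atom p) = (p \<in> V M w)"
| "sat M w (Neg p) = (\<not> sat M w p)"
| "sat M w (Conj p q) = (sat M w p \<and> sat M w q)"
| "sat M w (Box i p) = (\<forall>v. R M i w v \<longrightarrow> sat M v p)"

definition psat :: "('a,'i) pmodel \<Rightarrow> ('a,'i) fm \<Rightarrow> bool" where
  "psat x p = sat (fst x) (snd x) p"

definition modal_equiv :: "('a,'i) pmodel \<Rightarrow> ('a,'i) pmodel \<Rightarrow> bool" where
  "modal_equiv x y \<longleftrightarrow> (\<forall>p. psat x p \<longleftrightarrow> psat y p)"

definition bisimulation ::
  "('a,'i) kmodel \<Rightarrow> ('a,'i) kmodel \<Rightarrow> (nat \<Rightarrow> nat \<Rightarrow> bool) \<Rightarrow> bool" where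
  "bisimulation M N Z \<longleftrightarrow> (\<forall>u v. Z u v \<longrightarrow>
       u \<in> W M \<and> v \<in> W N \<and> V M u = V N v
     \<and> (\<forall>i u'. R M i u u' \<longrightarrow> (\<exists>v'. R N i v v' \<and> Z u' v'))
     \<and> (\<forall>i v'. R N i v v' \<longrightarrow> (\<exists>u'. R M i u u' \<and> Z u' v')))"

definition bisimilar :: "('a,'i) pmodel \<Rightarrow> ('a,'i) pmodel \<Rightarrow> bool" where
  "bisimilar x y \<longleftrightarrow> (\<exists>Z. bisimulation (fst x) (fst y) Z \<and> Z (snd x) (snd y))"

fun nbisim :: "nat \<Rightarrow> ('a,'i) kmodel \<Rightarrow> nat \<Rightarrow> ('a,'i) kmodel \<Rightarrow> nat \<Rightarrow> bool" where
  "nbisim 0 M u N v = (V M u = V N v)"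
| "nbisim (Suc n) M u N v = (V M u = V N v
     \<and> (\<forall>i u'. R M i u u' \<longrightarrow> (\<exists>v'. R N i v v' \<and> nbisim n M u' N v'))
     \<and> (\<forall>i v'. R N i v v' \<longrightarrow> (\<exists>u'. R M i u u' \<and> nbisim n M u' N v')))"

definition nbisimilar :: "nat \<Rightarrow> ('a,'i) pmodel \<Rightarrow> ('a,'i) pmodel \<Rightarrow> bool" where
  "nbisimilar n x y = nbisim n (fst x) (snd x) (fst y) (snd y)"

definition mclass :: "('a,'i) pmodel set \<Rightarrow> ('a,'i) pmodel \<Rightarrow> ('a,'i) pmodel set" where
  "mclass X x = {y \<in> X. modal_equiv y x}"

definition modal_space :: "('a,'i) pmodel set \<Rightarrow> ('a,'i) pmodel set set" where
  "modal_space X = mclass X ` X"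

definition rep :: "('a,'i) pmodel set \<Rightarrow> ('a,'i) pmodel" where
  "rep A = (SOME x. x \<in> A)"

definition dB :: "('a,'i) pmodel set \<Rightarrow> ('a,'i) pmodel set \<Rightarrow> real" where
  "dB A B = (if \<forall>n. nbisimilar n (rep A) (rep B) then 0
             else (1/2) ^ (LEAST n. \<not> nbisimilar n (rep A) (rep B)))"

text \<open>The metric family. D is a set of formulas, one representative per
\<Lambda>-equivalence class (so D stands for a set of classes).\<close>
definition admissible_D ::
  "('a,'i) fm set \<Rightarrow> ('a,'i) pmodel set \<Rightarrow> ('a,'i) fm set \<Rightarrow> bool" where
  "admissible_D L X D \<longleftrightarrow>
     (\<forall>p\<in>D. \<forall>q\<in>D. lequiv L p q \<longrightarrow> p = q)
   \<and> (\<forall>q. \<exists>Dq. finite Dq \<and> Dq \<subseteq> D \<and>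
        (\<forall>x\<in>X. \<forall>y\<in>X. (\<forall>c\<in>Dq. psat x c \<longleftrightarrow> psat y c) \<longrightarrow> (psat x q \<longleftrightarrow> psat y q)))"

definition admissible_w :: "('a,'i) fm set \<Rightarrow> (('a,'i) fm \<Rightarrow> real) \<Rightarrow> bool" where
  "admissible_w D w \<longleftrightarrow> (\<forall>p\<in>D. w p > 0) \<and> w summable_on D"

definition dw :: "('a,'i) fm set \<Rightarrow> (('a,'i) fm \<Rightarrow> real)
                   \<Rightarrow> ('a,'i) pmodel set \<Rightarrow> ('a,'i) pmodel set \<Rightarrow> real" where
  "dw D w A B = (\<Sum>\<^sub>\<infinity>p\<in>D. w p * (if psat (rep A) p = psat (rep B) p then 0 else 1))"

definition metric_family ::
  "('a,'i) fm set \<Rightarrow> ('a,'i) pmodel set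
     \<Rightarrow> (('a,'i) pmodel set \<Rightarrow> ('a,'i) pmodel set \<Rightarrow> real) set" where
  "metric_family L X = {dw D w | D w. admissible_D L X D \<and> admissible_w D w}"

end

theory Submission
  imports Defs "HOL-Library.Countable"
begin

instance fm :: (countable, countable) countable by countable_datatype

primrec mdepth :: "('a,'i) fm \<Rightarrow> nat" where
  "mdepth Top = 0"
| "mdepth (Atom p) = 0"
| "mdepth (Neg p) = mdepth p"
| "mdepth (Conj p q) = max (mdepth p) (mdepth q)"
| "mdepth (Box i p) = Suc (mdepth p)"

lemma nbisim_V: "nbisim n M u N v \<Longrightarrow> V M u = V N v"
  by (cases n) auto

lemma nbisim_pres: "nbisim n M u N v \<Longrightarrow> mdepth \<phi> \<le> n \<Longrightarrow> sat M u \<phi> = sat N v \<phi>"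
proof (induction \<phi> arbitrary: n u v)
  case (Box i p)
  then obtain m where n: "n = Suc m" and dm: "mdepth p \<le> m" by (cases n) auto
  from Box.prems(1) n have fw: "\<forall>u'. R M i u u' \<longrightarrow> (\<exists>v'. R N i v v' \<and> nbisim m M u' N v')"
    and bw: "\<forall>v'. R N i v v' \<longrightarrow> (\<exists>u'. R M i u u' \<and> nbisim m M u' N v')" by auto
  show ?case
  proof
    assume a: "sat M u (Box i p)"
    show "sat N v (Box i p)" unfolding sat.simps
    proof (intro allI impI)
      fix v' assume "R N i v v'"
      then obtain u' where "R M i u u'" "nbisim m M u' N v'" using bw by blast
      then show "sat N v' p" using a Box.IH[of m u' v'] dm by auto
    qed
  next
    assume a: "sat N v (Box i p)"
    show "sat M u (Box i p)" unfolding sat.simps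
    proof (intro allI impI)
      fix u' assume "R M i u u'"
      then obtain v' where "R N i v v'" "nbisim m M u' N v'" using fw by blast
      then show "sat M u' p" using a Box.IH[of m u' v'] dm by auto
    qed
  qed
qed (auto dest: nbisim_V)

lemma nbisim_Suc_mono: "nbisim (Suc n) M u N v \<Longrightarrow> nbisim n M u N v"
proof (induction n arbitrary: u v)
  case 0 then show ?case by simp
next
  case (Suc n)
  from Suc.prems have a: "V M u = V N v"
    and f: "\<forall>i u'. R M i u u' \<longrightarrow> (\<exists>v'. R N i v v' \<and> nbisim (Suc n) M u' N v')"
    and b: "\<forall>i v'. R N i v v' \<longrightarrow> (\<exists>u'. R M i u u' \<and> nbisim (Suc n) M u' N v')"
    by simp_all
  have f': "\<forall>i u'. R M i u u' \<longrightarrow> (\<exists>v'. R N i v v' \<and> nbisim n M u' N v')" using f Suc.IH by blast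
  have b': "\<forall>i v'. R N i v v' \<longrightarrow> (\<exists>u'. R M i u u' \<and> nbisim n M u' N v')" using b Suc.IH by blast
  show ?case using a f' b' by simp
qed

lemma nbisim_mono:
  assumes "m \<le> n" shows "nbisim n M u N v \<longrightarrow> nbisim m M u N v"
  using assms by (induction rule: dec_induct) (simp, metis nbisim_Suc_mono)

definition chi :: "('a,'i) fm list \<Rightarrow> ('a,'i) fm set \<Rightarrow> ('a,'i) fm" where
  "chi xs \<sigma> = foldr (\<lambda>\<phi> acc. Conj (if \<phi> \<in> \<sigma> then \<phi> else Neg \<phi>) acc) xs Top"

lemma sat_chi: "sat M w (chi xs \<sigma>) \<longleftrightarrow> (\<forall>\<phi>\<in>set xs. sat M w \<phi> \<longleftrightarrow> \<phi> \<in> \<sigma>)"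
  unfolding chi_def by (induction xs) auto

definition Dia :: "'i \<Rightarrow> ('a,'i) fm \<Rightarrow> ('a,'i) fm" where "Dia i p = Neg (Box i (Neg p))"

lemma sat_Dia[simp]: "sat M u (Dia i p) \<longleftrightarrow> (\<exists>v. R M i u v \<and> sat M v p)"
  by (simp add: Dia_def)

lemma char_exists:
  "\<exists>S::('a::finite,'i::finite) fm set. finite S \<and>
     (\<forall>M u N v. (\<forall>\<phi>\<in>S. sat M u \<phi> = sat N v \<phi>) \<longrightarrow> nbisim n M u N v)"
proof (induction n)
  case 0
  show ?case
  proof (intro exI conjI allI impI)
    show "finite (range Atom :: ('a,'i) fm set)" by simp
    fix M u N v assume h: "\<forall>\<phi>\<in>range Atom. sat M u \<phi> = sat (N::('a,'i) kmodel) v (\<phi>::('a,'i) fm)"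
    then have "\<forall>p. (p \<in> V M u) = (p \<in> V N v)" by auto
    then show "nbisim 0 M u N v" by auto
  qed
next
  case (Suc n)
  then obtain S :: "('a,'i) fm set" where fS: "finite S" and
    hS: "\<forall>M u N v. (\<forall>\<phi>\<in>S. sat M u \<phi> = sat N v \<phi>) \<longrightarrow> nbisim n M u N v" by blast
  obtain xs where xs: "set xs = S" using finite_list[OF fS] by blast
  define S' where "S' = range Atom \<union> (\<lambda>(i,\<sigma>). Dia i (chi xs \<sigma>)) ` (UNIV \<times> Pow S)"
  have "finite S'" using fS unfolding S'_def by simp
  moreover have "\<forall>M u N v. (\<forall>\<phi>\<in>S'. sat M u \<phi> = sat N v \<phi>) \<longrightarrow> nbisim (Suc n) M u N v"
  proof (intro allI impI)
    fix M u N v assume h: "\<forall>\<phi>\<in>S'. sat M u \<phi> = sat (N::('a,'i) kmodel) v \<phi>"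
    have "\<And>p. sat M u (Atom p) = sat N v (Atom p)" using h unfolding S'_def by blast
    then have "\<forall>p. (p \<in> V M u) = (p \<in> V N v)" by simp
    then have hA: "V M u = V N v" by auto
    have hD: "sat M u (Dia i (chi xs \<sigma>)) = sat N v (Dia i (chi xs \<sigma>))" if "\<sigma> \<subseteq> S" for i \<sigma>
    proof -
      have "Dia i (chi xs \<sigma>) \<in> S'" unfolding S'_def using that by (auto intro!: image_eqI[of _ _ "(i,\<sigma>)"])
      then show ?thesis using h by blast
    qed
    have forth: "\<forall>i u'. R M i u u' \<longrightarrow> (\<exists>v'. R N i v v' \<and> nbisim n M u' N v')"
    proof (intro allI impI)
      fix i u' assume r: "R M i u u'"
      let ?\<sigma> = "{\<phi>\<in>S. sat M u' \<phi>}"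
      have "sat M u (Dia i (chi xs ?\<sigma>))" using r by (auto simp: sat_chi xs)
      then have "sat N v (Dia i (chi xs ?\<sigma>))" using hD[of ?\<sigma> i] by auto
      then obtain v' where v': "R N i v v'" "sat N v' (chi xs ?\<sigma>)" by auto
      then have "\<forall>\<phi>\<in>S. sat M u' \<phi> = sat N v' \<phi>" by (auto simp: sat_chi xs)
      then show "\<exists>v'. R N i v v' \<and> nbisim n M u' N v'" using hS v' by blast
    qed
    have bkw: "\<forall>i v'. R N i v v' \<longrightarrow> (\<exists>u'. R M i u u' \<and> nbisim n M u' N v')"
    proof (intro allI impI)
      fix i v' assume r: "R N i v v'"
      let ?\<sigma> = "{\<phi>\<in>S. sat N v' \<phi>}"
      have "sat N v (Dia i (chi xs ?\<sigma>))" using r by (auto simp: sat_chi xs)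
      then have "sat M u (Dia i (chi xs ?\<sigma>))" using hD[of ?\<sigma> i] by auto
      then obtain u' where u': "R M i u u'" "sat M u' (chi xs ?\<sigma>)" by auto
      then have "\<forall>\<phi>\<in>S. sat M u' \<phi> = sat N v' \<phi>" by (auto simp: sat_chi xs)
      then show "\<exists>u'. R M i u u' \<and> nbisim n M u' N v'" using hS u' by blast
    qed
    show "nbisim (Suc n) M u N v" using hA forth bkw by simp
  qed
  ultimately show ?case by blast
qed

section \<open>Logic\<close>

lemma psat_Iff: "psat x (Iff p q) \<longleftrightarrow> (psat x p \<longleftrightarrow> psat x q)"
  by (auto simp: psat_def Iff_def Imp_def)

lemma nl_taut: "normal_logic L \<Longrightarrow> tautology p \<Longrightarrow> p \<in> L"
  by (simp add: normal_logic_def)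

lemma nl_mp: "normal_logic L \<Longrightarrow> p \<in> L \<Longrightarrow> Imp p q \<in> L \<Longrightarrow> q \<in> L"
  unfolding normal_logic_def by blast

lemma leq_refl: "normal_logic L \<Longrightarrow> lequiv L p p"
  unfolding lequiv_def by (rule nl_taut) (auto simp: tautology_def Iff_def Imp_def)

lemma leq_sym: "normal_logic L \<Longrightarrow> lequiv L p q \<Longrightarrow> lequiv L q p"
proof -
  assume nl: "normal_logic L" and a: "lequiv L p q"
  have "Imp (Iff p q) (Iff q p) \<in> L"
    by (rule nl_taut[OF nl]) (auto simp: tautology_def Iff_def Imp_def)
  then show ?thesis using nl_mp[OF nl] a unfolding lequiv_def by blast
qed

lemma leq_trans: "normal_logic L \<Longrightarrow> lequiv L p q \<Longrightarrow> lequiv L q r \<Longrightarrow> lequiv L p r"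
proof -
  assume nl: "normal_logic L" and a: "lequiv L p q" and b: "lequiv L q r"
  have "Imp (Iff p q) (Imp (Iff q r) (Iff p r)) \<in> L"
    by (rule nl_taut[OF nl]) (auto simp: tautology_def Iff_def Imp_def)
  then have "Imp (Iff q r) (Iff p r) \<in> L" using nl_mp[OF nl] a unfolding lequiv_def by blast
  then show ?thesis using nl_mp[OF nl] b unfolding lequiv_def by blast
qed

definition repL :: "('a,'i) fm set \<Rightarrow> ('a,'i) fm \<Rightarrow> ('a,'i) fm" where
  "repL L q = (SOME p. lequiv L p q)"

lemma repL_equiv: "normal_logic L \<Longrightarrow> lequiv L (repL L q) q"
  unfolding repL_def by (rule someI[of _ q]) (rule leq_refl)

lemma repL_eq: "normal_logic L \<Longrightarrow> lequiv L q1 q2 \<Longrightarrow> repL L q1 = repL L q2"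
proof -
  assume nl: "normal_logic L" and e: "lequiv L q1 q2"
  have "(\<lambda>p. lequiv L p q1) = (\<lambda>p. lequiv L p q2)"
    using leq_trans[OF nl] leq_sym[OF nl] e by blast
  then show ?thesis unfolding repL_def by simp
qed

section \<open>Weights\<close>

definition wt :: "'b::countable \<Rightarrow> real" where "wt p = (1/2) ^ (to_nat p)"

lemma wt_pos: "wt p > 0" by (simp add: wt_def)

lemma geom_summable: "(\<lambda>k::nat. (1/2::real)^k) summable_on UNIV"
  by (rule summable_nonneg_imp_summable_on[OF summable_geometric]) auto

lemma wt_summable: "wt summable_on A"
proof -
  have "(\<lambda>k::nat. (1/2::real)^k) summable_on (to_nat ` A)"
    using geom_summable summable_on_subset_banach by blast
  then have "((\<lambda>k::nat. (1/2::real)^k) \<circ> to_nat) summable_on A"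
    by (subst (asm) summable_on_reindex) (auto simp: inj_on_def)
  then show ?thesis by (simp add: wt_def[abs_def] o_def)
qed

lemma geom_tail: "((\<lambda>k::nat. (1/2::real)^k) has_sum (2*(1/2)^N)) {N..}"
proof -
  have "(\<lambda>j. (1/2::real)^N * (1/2)^j) sums ((1/2)^N * (1/(1-1/2)))"
    by (intro sums_mult geometric_sums) simp
  then have "(\<lambda>j. (1/2::real)^N * (1/2)^j) sums (2*(1/2)^N)" by (simp add: mult.commute)
  then have h: "((\<lambda>j. (1/2::real)^N * (1/2)^j) has_sum (2*(1/2)^N)) UNIV"
    by (rule sums_nonneg_imp_has_sum) simp
  have im: "{N..} = (\<lambda>j. j+N) ` UNIV"
  proof
    show "{N..} \<subseteq> (\<lambda>j. j + N) ` UNIV"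
    proof
      fix x assume "x \<in> {N..}"
      then have "x = (x - N) + N" by simp
      then show "x \<in> (\<lambda>j. j + N) ` UNIV" by blast
    qed
  qed auto
  have "((\<lambda>k::nat. (1/2::real)^k) has_sum (2*(1/2)^N)) ((\<lambda>j. j+N) ` UNIV)"
    by (subst has_sum_reindex) (use h in \<open>auto simp: o_def power_add mult.commute\<close>)
  then show ?thesis using im by simp
qed

lemma wt_tail:
  assumes "\<forall>p\<in>A. to_nat p \<ge> N" shows "infsum wt A \<le> 2*(1/2)^N"
proof -
  have "infsum wt A = infsum (\<lambda>k::nat. (1/2::real)^k) (to_nat ` A)"
    by (subst infsum_reindex) (auto simp: wt_def[abs_def] o_def inj_on_def)
  also have "\<dots> \<le> infsum (\<lambda>k::nat. (1/2::real)^k) {N..}"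
    by (rule infsum_mono2) (use geom_summable summable_on_subset_banach assms in auto)
  also have "\<dots> = 2*(1/2)^N" using geom_tail infsumI by blast
  finally show ?thesis .
qed

lemma term_summable: "(\<lambda>p. wt p * (if P p then 0 else 1)) summable_on A"
  by (rule summable_on_comparison_test[OF wt_summable]) (auto simp: wt_pos less_imp_le)

lemma dw_ge:
  assumes "d \<in> D" "psat (rep A) d \<noteq> psat (rep B) d"
  shows "wt d \<le> dw D wt A B"
proof -
  have "sum (\<lambda>p. wt p * (if psat (rep A) p = psat (rep B) p then 0 else 1)) {d}
        \<le> dw D wt A B"
    unfolding dw_def
    by (rule finite_sum_le_infsum[OF term_summable]) (use assms in \<open>auto simp: wt_pos less_imp_le\<close>)
  then show ?thesis using assms by simp
qed

lemma dw_le: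
  assumes "\<forall>p\<in>D. to_nat p < N \<longrightarrow> psat (rep A) p = psat (rep B) p"
  shows "dw D wt A B \<le> 2*(1/2)^N"
proof -
  have "dw D wt A B \<le> infsum wt {p\<in>D. to_nat p \<ge> N}"
    unfolding dw_def
    by (rule infsum_mono_neutral[OF term_summable wt_summable])
       (use assms in \<open>auto simp: wt_pos less_imp_le\<close>)
  also have "\<dots> \<le> 2*(1/2)^N" by (rule wt_tail) auto
  finally show ?thesis .
qed

lemma dw_nonneg: "0 \<le> dw D wt A B"
  unfolding dw_def by (rule infsum_nonneg) (auto simp: wt_pos less_imp_le)

lemma dw_commute: "dw D wt A B = dw D wt B A"
  unfolding dw_def by (rule infsum_cong) auto

lemma dw_self: "dw D wt A A = 0"
  unfolding dw_def by (rule infsum_0) auto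

lemma dw_triangle: "dw D wt A C \<le> dw D wt A B + dw D wt B C"
proof -
  have "dw D wt A C \<le> infsum (\<lambda>p. wt p * (if psat (rep A) p = psat (rep B) p then 0 else 1)
        + wt p * (if psat (rep B) p = psat (rep C) p then 0 else 1)) D"
    unfolding dw_def
    by (rule infsum_mono[OF term_summable summable_on_add[OF term_summable term_summable]])
       (auto simp: wt_pos less_imp_le)
  also have "\<dots> = dw D wt A B + dw D wt B C"
    unfolding dw_def by (rule infsum_add[OF term_summable term_summable])
  finally show ?thesis .
qed

section \<open>Topology\<close>

lemma mtop_eq:
  assumes m1: "Metric_space M d1" and m2: "Metric_space M d2"
  and h1: "\<And>x r. x \<in> M \<Longrightarrow> r > 0 \<Longrightarrow> \<exists>s>0. \<forall>y\<in>M. d2 x y < s \<longrightarrow> d1 x y < r"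
    and h2: "\<And>x r. x \<in> M \<Longrightarrow> r > 0 \<Longrightarrow> \<exists>s>0. \<forall>y\<in>M. d1 x y < s \<longrightarrow> d2 x y < r"
  shows "Metric_space.mtopology M d1 = Metric_space.mtopology M d2"
proof -
  have key: "Metric_space.mopen M da U \<Longrightarrow> Metric_space.mopen M db U"
    if ma: "Metric_space M da" and mb: "Metric_space M db" and h: "\<And>x r. x \<in> M \<Longrightarrow> r > 0 \<Longrightarrow> \<exists>s>0. \<forall>y\<in>M. db x y < s \<longrightarrow> da x y < r"
    for da db U
  proof -
    assume a0: "Metric_space.mopen M da U"
    have a: "U \<subseteq> M \<and> (\<forall>x. x \<in> U \<longrightarrow> (\<exists>r>0. {y. x \<in> M \<and> y \<in> M \<and> da x y < r} \<subseteq> U))"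
      using a0 by (simp add: Metric_space.mopen_def[OF ma] Metric_space.mball_def[OF ma])
    have "U \<subseteq> M \<and> (\<forall>x. x \<in> U \<longrightarrow> (\<exists>r>0. {y. x \<in> M \<and> y \<in> M \<and> db x y < r} \<subseteq> U))"
    proof (intro conjI allI impI)
      show "U \<subseteq> M" using a by blast
      fix x assume x: "x \<in> U"
      then obtain r where r: "r > 0" "{y. x \<in> M \<and> y \<in> M \<and> da x y < r} \<subseteq> U"
        using a by blast
      have "x \<in> M" using x a by blast
      then obtain s where s: "s > 0" "\<forall>y\<in>M. db x y < s \<longrightarrow> da x y < r" using h r by blast
      show "\<exists>r>0. {y. x \<in> M \<and> y \<in> M \<and> db x y < r} \<subseteq> U"
        using s r by blast
    qed
    then show ?thesis by (simp add: Metric_space.mopen_def[OF mb] Metric_space.mball_def[OF mb])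
  qed
  have "Metric_space.mopen M d1 = Metric_space.mopen M d2"
    using key[OF m2 m1] key[OF m1 m2] h1 h2 by blast
  then show ?thesis by (simp add: Metric_space.mtopology_def[OF m1] Metric_space.mtopology_def[OF m2])
qed

lemma nbisim_refl: "nbisim n M u M u"
  by (induction n arbitrary: u) auto

lemma nbisim_sym: "nbisim n M u N v \<Longrightarrow> nbisim n N v M u"
proof (induction n arbitrary: u v)
  case 0 then show ?case by simp
next
  case (Suc n)
  from Suc.prems have a: "V M u = V N v"
    and f: "\<forall>i u'. R M i u u' \<longrightarrow> (\<exists>v'. R N i v v' \<and> nbisim n M u' N v')"
    and b: "\<forall>i v'. R N i v v' \<longrightarrow> (\<exists>u'. R M i u u' \<and> nbisim n M u' N v')"
    by simp_all
  have f': "\<forall>i u'. R M i u u' \<longrightarrow> (\<exists>v'. R N i v v' \<and> nbisim n N v' M u')" using f Suc.IH by blast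
  have b': "\<forall>i v'. R N i v v' \<longrightarrow> (\<exists>u'. R M i u u' \<and> nbisim n N v' M u')" using b Suc.IH by blast
  show ?case using a f' b' by simp
qed

lemma nbisim_trans: "nbisim n M u N v \<Longrightarrow> nbisim n N v K w \<Longrightarrow> nbisim n M u K w"
proof (induction n arbitrary: u v w)
  case 0 then show ?case by simp
next
  case (Suc n)
  from Suc.prems(1) have a: "V M u = V N v"
    and f: "\<forall>i u'. R M i u u' \<longrightarrow> (\<exists>v'. R N i v v' \<and> nbisim n M u' N v')"
    and b: "\<forall>i v'. R N i v v' \<longrightarrow> (\<exists>u'. R M i u u' \<and> nbisim n M u' N v')"
    by simp_all
  from Suc.prems(2) have a2: "V N v = V K w"
    and f2: "\<forall>i u'. R N i v u' \<longrightarrow> (\<exists>v'. R K i w v' \<and> nbisim n N u' K v')"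
    and b2: "\<forall>i v'. R K i w v' \<longrightarrow> (\<exists>u'. R N i v u' \<and> nbisim n N u' K v')"
    by simp_all
  have f': "\<forall>i u'. R M i u u' \<longrightarrow> (\<exists>v'. R K i w v' \<and> nbisim n M u' K v')"
  proof (intro allI impI)
    fix i u' assume "R M i u u'"
    then obtain v' where "R N i v v'" "nbisim n M u' N v'" using f by blast
    then obtain w' where "R K i w w'" "nbisim n N v' K w'" using f2 by blast
    then show "\<exists>v'. R K i w v' \<and> nbisim n M u' K v'" using Suc.IH \<open>nbisim n M u' N v'\<close> by blast
  qed
  have b': "\<forall>i v'. R K i w v' \<longrightarrow> (\<exists>u'. R M i u u' \<and> nbisim n M u' K v')"
  proof (intro allI impI)
    fix i w' assume "R K i w w'"
    then obtain v' where "R N i v v'" "nbisim n N v' K w'" using b2 by blast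
    then obtain u' where "R M i u u'" "nbisim n M u' N v'" using b by blast
    then show "\<exists>u'. R M i u u' \<and> nbisim n M u' K w'" using Suc.IH \<open>nbisim n N v' K w'\<close> by blast
  qed
  show ?case using a a2 f' b' by simp
qed

lemma dB_zero_iff: "dB A B = 0 \<longleftrightarrow> (\<forall>n. nbisimilar n (rep A) (rep B))"
  by (simp add: dB_def)

lemma dB_nonneg: "0 \<le> dB A B"
  by (simp add: dB_def)

lemma dB_commute: "dB A B = dB B A"
proof -
  have e: "\<And>n. nbisimilar n (rep A) (rep B) = nbisimilar n (rep B) (rep A)"
    by (auto simp: nbisimilar_def intro: nbisim_sym)
  show ?thesis unfolding dB_def e ..
qed

lemma dB_ge_least:
  assumes "\<not> nbisimilar m (rep A) (rep B)"
  shows "(1/2::real)^m \<le> dB A B"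
proof -
  have F: "\<not> (\<forall>n. nbisimilar n (rep A) (rep B))" using assms by blast
  have "(LEAST n. \<not> nbisimilar n (rep A) (rep B)) \<le> m" using assms by (rule Least_le)
  moreover have "dB A B = (1/2)^(LEAST n. \<not> nbisimilar n (rep A) (rep B))"
    unfolding dB_def by (simp only: if_not_P[OF F])
  ultimately show ?thesis by (simp add: power_decreasing)
qed

lemma dB_triangle: "dB A C \<le> dB A B + dB B C"
proof (cases "\<forall>n. nbisimilar n (rep A) (rep C)")
  case True then show ?thesis by (simp add: dB_def add_nonneg_nonneg)
next
  case False
  let ?m = "LEAST n. \<not> nbisimilar n (rep A) (rep C)"
  have nm: "\<not> nbisimilar ?m (rep A) (rep C)" using False by (metis (mono_tags, lifting) LeastI)
  have e: "dB A C = (1/2)^?m" unfolding dB_def by (simp only: if_not_P[OF False])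
  have "\<not> nbisimilar ?m (rep A) (rep B) \<or> \<not> nbisimilar ?m (rep B) (rep C)"
    using nm nbisim_trans unfolding nbisimilar_def by blast
  then show ?thesis
  proof
    assume "\<not> nbisimilar ?m (rep A) (rep B)"
    then have "dB A C \<le> dB A B" using e dB_ge_least by simp
    then show ?thesis using dB_nonneg[of B C] by linarith
  next
    assume "\<not> nbisimilar ?m (rep B) (rep C)"
    then have "dB A C \<le> dB B C" using e dB_ge_least by simp
    then show ?thesis using dB_nonneg[of A B] by linarith
  qed
qed

lemma dB_lt: "dB A B < (1/2)^n \<Longrightarrow> nbisimilar n (rep A) (rep B)"
proof (cases "\<forall>n. nbisimilar n (rep A) (rep B)")
  case True then show ?thesis by simp
next
  case False
  let ?m = "LEAST n. \<not> nbisimilar n (rep A) (rep B)"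
  assume "dB A B < (1/2)^n"
  moreover have "dB A B = (1/2)^?m" unfolding dB_def by (simp only: if_not_P[OF False])
  ultimately have "(1/2::real)^?m < (1/2)^n" by simp
  then have "n < ?m" by simp
  then show ?thesis using not_less_Least by blast
qed

lemma dB_gt: "nbisimilar n (rep A) (rep B) \<Longrightarrow> dB A B < (1/2)^n"
proof (cases "\<forall>n. nbisimilar n (rep A) (rep B)")
  case True then show ?thesis by (simp add: dB_def)
next
  case False
  assume nb: "nbisimilar n (rep A) (rep B)"
  let ?m = "LEAST n. \<not> nbisimilar n (rep A) (rep B)"
  have nm: "\<not> nbisimilar ?m (rep A) (rep B)" using False by (metis (mono_tags, lifting) LeastI)
  have "n < ?m"
  proof (rule ccontr)
    assume "\<not> n < ?m"
    then have "?m \<le> n" by simp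
    then show False using nbisim_mono[of ?m n] nb nm unfolding nbisimilar_def by blast
  qed
  moreover have "dB A B = (1/2)^?m" unfolding dB_def by (simp only: if_not_P[OF False])
  ultimately show ?thesis by simp
qed

lemma rep_class:
  assumes "A \<in> modal_space X" shows "rep A \<in> X \<and> A = mclass X (rep A)"
proof -
  obtain x0 where x0: "x0 \<in> X" "A = mclass X x0" using assms unfolding modal_space_def by blast
  then have "x0 \<in> A" by (simp add: mclass_def modal_equiv_def)
  then have "rep A \<in> A" unfolding rep_def by (rule someI)
  then have "rep A \<in> X" "modal_equiv (rep A) x0" using x0 by (auto simp: mclass_def)
  moreover have "mclass X x0 = mclass X (rep A)"
  proof -
    have e: "\<And>p. psat (rep A) p = psat x0 p" using calculation(2) unfolding modal_equiv_def by blast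
    have "\<And>y. modal_equiv y x0 = modal_equiv y (rep A)" unfolding modal_equiv_def using e by simp
    then show ?thesis unfolding mclass_def by simp
  qed
  ultimately show ?thesis using trans[OF x0(2)] by blast
qed

lemma dB_metric: "Metric_space (modal_space X) dB"
proof
  show "\<And>x y. 0 \<le> dB x y" by (rule dB_nonneg)
  show "\<And>x y. dB x y = dB y x" by (rule dB_commute)
  show "\<And>x y z. dB x z \<le> dB x y + dB y z" by (rule dB_triangle)
  fix A B assume A: "A \<in> modal_space X" and B: "B \<in> modal_space X"
  show "dB A B = 0 \<longleftrightarrow> A = B"
  proof
    assume "dB A B = 0"
    then have nb: "\<forall>n. nbisimilar n (rep A) (rep B)" by (simp add: dB_zero_iff)
    have "\<forall>q. psat (rep A) q = psat (rep B) q"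
    proof
      fix q
      show "psat (rep A) q = psat (rep B) q"
        using nbisim_pres[of "mdepth q"] nb unfolding nbisimilar_def psat_def by blast
    qed
    then have "mclass X (rep A) = mclass X (rep B)"
      by (auto simp: mclass_def modal_equiv_def)
    then show "A = B" using rep_class[OF A] rep_class[OF B] by simp
  qed (simp add: dB_zero_iff nbisimilar_def nbisim_refl)
qed

theorem proposition5:
  fixes L :: "('a::finite, 'i::finite) fm set"
    and X :: "('a, 'i) pmodel set"
  assumes "normal_logic L"
    and "\<forall>x\<in>X. wf_pmodel x"
    and "\<forall>x\<in>X. \<forall>p\<in>L. psat x p"
    and "\<forall>x\<in>X. \<forall>y\<in>X. modal_equiv x y \<longleftrightarrow> bisimilar x y"
  shows "\<exists>d\<in>metric_family L X.
           Metric_space (modal_space X) d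
         \<and> Metric_space.mtopology (modal_space X) d
             = Metric_space.mtopology (modal_space X) dB"
proof -
  note nl = assms(1)
  define D where "D = range (repL L)"
  have rl: "\<And>x q. x \<in> X \<Longrightarrow> psat x (repL L q) = psat x q"
    using assms(3) repL_equiv[OF nl] psat_Iff unfolding lequiv_def by blast
  have admD: "admissible_D L X D"
    unfolding admissible_D_def
  proof (intro conjI ballI impI allI)
    fix p q assume "p \<in> D" "q \<in> D" "lequiv L p q"
    then obtain q1 q2 where "p = repL L q1" "q = repL L q2" unfolding D_def by blast
    moreover have "lequiv L q1 q2"
      using calculation \<open>lequiv L p q\<close> repL_equiv[OF nl] leq_sym[OF nl] leq_trans[OF nl] by metis
    ultimately show "p = q" using repL_eq[OF nl] by blast
  next
    fix q
    show "\<exists>Dq. finite Dq \<and> Dq \<subseteq> D \<and>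
        (\<forall>x\<in>X. \<forall>y\<in>X. (\<forall>c\<in>Dq. psat x c \<longleftrightarrow> psat y c) \<longrightarrow> (psat x q \<longleftrightarrow> psat y q))"
      by (rule exI[of _ "{repL L q}"]) (auto simp: D_def rl)
  qed
  have admw: "admissible_w D wt"
    unfolding admissible_w_def by (auto simp: wt_pos wt_summable)
  let ?MS = "modal_space X"
  let ?d = "dw D wt"
  have agree: "\<And>A B. A \<in> ?MS \<Longrightarrow> B \<in> ?MS \<Longrightarrow> ?d A B < wt d \<Longrightarrow> d \<in> D \<Longrightarrow>
        psat (rep A) d = psat (rep B) d" for d
    using dw_ge by fastforce
  have ms: "Metric_space ?MS ?d"
  proof
    show "\<And>x y. 0 \<le> ?d x y" by (rule dw_nonneg)
    show "\<And>x y. ?d x y = ?d y x" by (rule dw_commute)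
    show "\<And>x y z. ?d x z \<le> ?d x y + ?d y z" by (rule dw_triangle)
    fix A B assume A: "A \<in> ?MS" and B: "B \<in> ?MS"
    show "?d A B = 0 \<longleftrightarrow> A = B"
    proof
      assume z: "?d A B = 0"
      have "\<forall>d\<in>D. psat (rep A) d = psat (rep B) d"
        using dw_ge[of _ D A B] z wt_pos by (metis not_le)
      then have "\<forall>q. psat (rep A) q = psat (rep B) q"
        using rl rep_class[OF A] rep_class[OF B] unfolding D_def by (metis rangeI)
      then have "mclass X (rep A) = mclass X (rep B)"
        by (auto simp: mclass_def modal_equiv_def)
      then show "A = B" using rep_class[OF A] rep_class[OF B] by simp
    qed (simp add: dw_self)
  qed
  have top: "Metric_space.mtopology ?MS ?d = Metric_space.mtopology ?MS dB"
  proof (rule mtop_eq[OF ms dB_metric])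
    fix A and r :: real assume A: "A \<in> ?MS" and r: "r > 0"
    obtain N where N: "(1/2::real)^N < r/2" using real_arch_pow_inv[of "r/2" "1/2::real"] r by auto
    define F where "F = {p\<in>D. to_nat p < N}"
    have fF: "finite F"
      by (rule finite_subset[OF _ finite_vimageI[OF finite_lessThan[of N] inj_to_nat]])
         (auto simp: F_def)
    define n where "n = Max (mdepth ` F)"
    show "\<exists>s>0. \<forall>B\<in>?MS. dB A B < s \<longrightarrow> ?d A B < r"
    proof (intro exI conjI ballI impI)
      show "(0::real) < (1/2)^n" by simp
      fix B assume "B \<in> ?MS" "dB A B < (1/2)^n"
      then have nb: "nbisimilar n (rep A) (rep B)" using dB_lt by blast
      have "\<forall>p\<in>D. to_nat p < N \<longrightarrow> psat (rep A) p = psat (rep B) p"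
      proof (intro ballI impI)
        fix p assume "p \<in> D" "to_nat p < N"
        then have "p \<in> F" by (simp add: F_def)
        then have "mdepth p \<le> n" unfolding n_def using fF by simp
        then show "psat (rep A) p = psat (rep B) p"
          using nbisim_pres nb unfolding nbisimilar_def psat_def by blast
      qed
      then have "?d A B \<le> 2*(1/2)^N" by (rule dw_le)
      then show "?d A B < r" using N by simp
    qed
  next
    fix A and r :: real assume A: "A \<in> ?MS" and r: "r > 0"
    obtain n where n: "(1/2::real)^n < r" using real_arch_pow_inv[of r "1/2::real"] r by auto
    obtain S :: "('a,'i) fm set" where fS: "finite S" and
      hS: "\<forall>M u N v. (\<forall>\<phi>\<in>S. sat M u \<phi> = sat N v \<phi>) \<longrightarrow> nbisim n M u N v"
      using char_exists by blast
    define F where "F = repL L ` S"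
    have fF: "finite F" using fS by (simp add: F_def)
    define s where "s = Min (insert 1 (wt ` F))"
    show "\<exists>s>0. \<forall>B\<in>?MS. ?d A B < s \<longrightarrow> dB A B < r"
    proof (intro exI conjI ballI impI)
      show "0 < s" unfolding s_def using fF by (auto simp: wt_pos)
      fix B assume B: "B \<in> ?MS" and ds: "?d A B < s"
      have "\<forall>d\<in>F. psat (rep A) d = psat (rep B) d"
      proof
        fix d assume d: "d \<in> F"
        have "s \<le> wt d" unfolding s_def using fF d by simp
        then show "psat (rep A) d = psat (rep B) d"
          using agree[OF A B, of d] ds d unfolding F_def D_def by auto
      qed
      then have "\<forall>\<phi>\<in>S. psat (rep A) \<phi> = psat (rep B) \<phi>"
      proof (intro ballI)
        fix \<phi> assume "\<forall>d\<in>F. psat (rep A) d = psat (rep B) d" "\<phi> \<in> S"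
        then have "psat (rep A) (repL L \<phi>) = psat (rep B) (repL L \<phi>)" unfolding F_def by blast
        then show "psat (rep A) \<phi> = psat (rep B) \<phi>"
          using rl rep_class[OF A] rep_class[OF B] by metis
      qed
      then have "nbisimilar n (rep A) (rep B)"
        using hS unfolding nbisimilar_def psat_def by blast
      then have "dB A B < (1/2)^n" by (rule dB_gt)
      then show "dB A B < r" using n by simp
    qed
  qed
  have "?d \<in> metric_family L X"
    unfolding metric_family_def using admD admw by blast
  then show ?thesis using ms top by blast
qed

end
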